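(* Let $g:(0,\infty)\to(0,\infty)$ be a function that converges monotonically to zero. If there exists $\epsilon>0$ such that for all $n$ large enough $$\frac{\Lambda_g(n)}{\log\log n}\ \ge\ 2+\epsilon,$$ then $\mathbb P$-almost surely, for all $n$ large enough, $\lambda_1^{(n)}\le 2d\,g(n)$.
   Context: Let $d\ge 2$. Let $\mathfrak E_d=\{\{x,y\}: x,y\in\mathbb Z^d,\ |x-y|_1=1\}$ be the nearest-neighbour edges of $\mathbb Z^d$; write $x\sim y$ if $\{x,y\}\in\mathfrak E_d$. The environment $\boldsymbol w=(w_e)_{e\in\mathfrak E_d}$ (conductances; $w_{xy}=w_{yx}=w_{\{x,y\}}$) is a family of i.i.d. $(0,\infty)$-valued random variables with law $\mathbb P$; $w$ denotes a generic copy. Let $B_n=[-n,n]^d\cap\mathbb Z^d$. For $f\in\ell^2(\mathbb Z^d)$ real-valued, $(\mathcal L_{\boldsymbol w}f)(x)=\sum_{y\sim x}w_{xy}(f(y)-f(x))$ and $\mathcal E^{\boldsymbol w}(f)=\langle f,-\mathcal L_{\boldsymbol w}f\rangle=\frac12\sum_{x}\sum_{y\sim x}w_{xy}(f(x)-f(y))^2$. The principal Dirichlet eigenvalue in $B_n$ is $\lambda_1^{(n)}=\inf\{\mathcal E^{\boldsymbol w}(f): f\in\ell^2(\mathbb Z^d),\ \mathrm{supp}\,f\subseteq B_n,\ \|f\|_2=1\}$. For $g:(0,\infty)\to(0,\infty)$ define $\Lambda_g(u)=u^d\,\mathbb P[w\le g(u)]^{2d}$. *)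

theory Defs
  imports "HOL-Probability.Probability"
begin

text \<open>Points of Z^d are vectors int^'d, with d = CARD('d).\<close>

definition l1dist :: "int^'d \<Rightarrow> int^'d \<Rightarrow> int" where
  "l1dist x y = (\<Sum>i\<in>UNIV. \<bar>x$i - y$i\<bar>)"

definition adj :: "int^'d \<Rightarrow> int^'d \<Rightarrow> bool" where
  "adj x y \<longleftrightarrow> l1dist x y = 1"

definition edges :: "(int^'d) set set" where
  "edges = {{x, y} | x y. adj x y}"

definition box :: "nat \<Rightarrow> (int^'d) set" where
  "box n = {x. \<forall>i. \<bar>x$i\<bar> \<le> int n}"

definition energy :: "((int^'d) set \<Rightarrow> real) \<Rightarrow> (int^'d \<Rightarrow> real) \<Rightarrow> real" where
  "energy w f = (\<Sum>\<^sub>\<infinity>x. (\<Sum>y\<in>{y. adj x y}. w {x, y} * (f x - f y)^2)) / 2"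

definition l2norm_sq :: "(int^'d \<Rightarrow> real) \<Rightarrow> real" where
  "l2norm_sq f = (\<Sum>\<^sub>\<infinity>x. (f x)^2)"

definition lambda1 :: "((int^'d) set \<Rightarrow> real) \<Rightarrow> nat \<Rightarrow> real" where
  "lambda1 w n = Inf {energy w f | f. (\<forall>x. f x \<noteq> 0 \<longrightarrow> x \<in> box n) \<and> l2norm_sq f = 1}"

definition Lambda :: "nat \<Rightarrow> real measure \<Rightarrow> (real \<Rightarrow> real) \<Rightarrow> real \<Rightarrow> real" where
  "Lambda d \<mu> g u = u ^ d * (measure \<mu> {..g u}) ^ (2 * d)"

end

theory Submission
  imports Defs
begin


lemma adj_sym: "adj x y = adj y x"
  unfolding adj_def l1dist_def by (simp add: abs_minus_commute)

lemma not_adj_self: "\<not> adj x x"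
  unfolding adj_def l1dist_def by simp

definition upd1 :: "int^'d \<Rightarrow> 'd \<Rightarrow> int \<Rightarrow> int^'d" where
  "upd1 x i s = (\<chi> j. if j = i then x$j + s else x$j)"

lemma adj_form:
  fixes x y :: "int^'d"
  assumes "adj x y"
  shows "\<exists>i s. s \<in> {1,-1} \<and> y = upd1 x i s"
proof -
  let ?t = "\<lambda>i. \<bar>x$i - y$i\<bar>"
  have S: "(\<Sum>i\<in>UNIV. ?t i) = 1" using assms unfolding adj_def l1dist_def .
  have "\<exists>i. ?t i \<noteq> 0"
  proof (rule ccontr)
    assume "\<not> ?thesis" then have "(\<Sum>i\<in>UNIV. ?t i) = 0" by simp
    with S show False by simp
  qed
  then obtain i where i: "?t i \<noteq> 0" by blast
  have split: "(\<Sum>j\<in>UNIV. ?t j) = ?t i + (\<Sum>j\<in>UNIV-{i}. ?t j)"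
    by (simp add: sum.remove)
  have nn: "(\<Sum>j\<in>UNIV-{i}. ?t j) \<ge> 0" by (simp add: sum_nonneg)
  have ti: "?t i = 1" using S split nn i by linarith
  have rest: "(\<Sum>j\<in>UNIV-{i}. ?t j) = 0" using S split ti by linarith
  have others: "\<And>j. j \<noteq> i \<Longrightarrow> ?t j = 0"
    using rest by (subst (asm) sum_nonneg_eq_0_iff) auto
  define s where "s = y$i - x$i"
  have "s \<in> {1,-1}" using ti unfolding s_def by (auto simp: abs_if split: if_splits)
  moreover have "y = upd1 x i s"
    unfolding upd1_def s_def
  proof (rule vec_eq_iff[THEN iffD2], intro allI)
    fix j show "y $ j = (\<chi> j. if j = i then x $ j + (y $ i - x $ i) else x $ j) $ j"
      using others[of j] by auto
  qed
  ultimately show ?thesis by blast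
qed

definition nbr :: "int^'d \<Rightarrow> (int^'d) set" where
  "nbr x = {y. adj x y}"

lemma nbr_sub: "nbr x \<subseteq> (\<lambda>(i,s). upd1 x i s) ` (UNIV \<times> {1,-1})"
  unfolding nbr_def using adj_form by fastforce

lemma finite_nbr: "finite (nbr x)"
  by (rule finite_subset[OF nbr_sub]) auto

lemma card_nbr: "card (nbr (x::int^'d)) \<le> 2 * CARD('d)"
proof -
  have "card (nbr x) \<le> card ((\<lambda>(i,s). upd1 x i s) ` (UNIV \<times> {1::int,-1}))"
    by (rule card_mono[OF _ nbr_sub]) auto
  also have "\<dots> \<le> card (UNIV \<times> {1::int,-1} :: ('d \<times> int) set)" by (rule card_image_le) auto
  also have "\<dots> = 2 * CARD('d)" by (simp add: card_cartesian_product)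
  finally show ?thesis .
qed

definition star :: "int^'d \<Rightarrow> (int^'d) set set" where
  "star x = (\<lambda>y. {x,y}) ` nbr x"

lemma finite_star: "finite (star x)" unfolding star_def using finite_nbr by (rule finite_imageI)

lemma card_star: "card (star (x::int^'d)) \<le> 2 * CARD('d)"
  unfolding star_def using card_image_le[OF finite_nbr] card_nbr order_trans by blast

lemma star_edges: "star x \<subseteq> edges"
  unfolding star_def nbr_def edges_def by auto

lemma star_ne: "star (x::int^'d) \<noteq> {}"
proof -
  obtain i :: 'd where True by simp
  have "adj x (upd1 x i 1)"
    unfolding adj_def l1dist_def upd1_def
    by (subst sum.remove[of _ i]) auto
  then show ?thesis unfolding star_def nbr_def by auto
qed



definition delta :: "int^'d \<Rightarrow> int^'d \<Rightarrow> real" where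
  "delta x z = (if z = x then 1 else 0)"

lemma l2_delta: "l2norm_sq (delta x) = 1"
proof -
  have "l2norm_sq (delta x) = infsum (\<lambda>z. (delta x z)^2) {x}"
    unfolding l2norm_sq_def by (rule infsum_cong_neutral) (auto simp: delta_def)
  then show ?thesis by (simp add: delta_def)
qed

lemma energy_delta:
  fixes x :: "int^'d"
  shows "energy w (delta x) = (\<Sum>y\<in>nbr x. w {x,y})"
proof -
  let ?h = "\<lambda>z. (\<Sum>y\<in>{y. adj z y}. w {z, y} * (delta x z - delta x y)^2)"
  let ?A = "(\<Sum>y\<in>nbr x. w {x,y})"
  have hx: "?h x = ?A"
    unfolding nbr_def[symmetric]
    by (rule sum.cong) (auto simp: delta_def nbr_def not_adj_self)
  have hz: "?h z = (if adj z x then w {x,z} else 0)" if "z \<noteq> x" for z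
  proof -
    have "?h z = (\<Sum>y\<in>nbr z. if y = x then w {z,y} else 0)"
      unfolding nbr_def[symmetric]
      by (rule sum.cong) (auto simp: delta_def that)
    also have "\<dots> = (if x \<in> nbr z then w {z,x} else 0)"
      using finite_nbr[of z] by (simp add: sum.delta')
    finally show ?thesis by (simp add: nbr_def insert_commute)
  qed
  have "infsum ?h UNIV = infsum ?h (insert x (nbr x))"
  proof (rule infsum_cong_neutral)
    fix z assume "z \<in> UNIV - insert x (nbr x)"
    then show "?h z = 0" using hz[of z] by (auto simp: nbr_def adj_sym)
  qed auto
  also have "\<dots> = ?h x + sum ?h (nbr x)"
    using finite_nbr[of x] by (simp add: not_adj_self nbr_def)
  also have "sum ?h (nbr x) = ?A"
  proof (rule sum.cong)
    fix z assume z: "z \<in> nbr x"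
    then have "z \<noteq> x" "adj z x" by (auto simp: nbr_def not_adj_self adj_sym)
    then show "?h z = w {x,z}" using hz[of z] by simp
  qed simp
  finally have "infsum ?h UNIV = 2 * ?A" using hx by simp
  then show ?thesis unfolding energy_def by simp
qed

lemma energy_nonneg:
  assumes "\<And>x y. adj x y \<Longrightarrow> w {x,y} \<ge> 0"
  shows "energy w f \<ge> 0"
  unfolding energy_def
  by (intro divide_nonneg_pos infsum_nonneg sum_nonneg mult_nonneg_nonneg) (auto intro: assms)

lemma lambda1_le:
  fixes x :: "int^'d"
  assumes nn: "\<And>x y. adj x y \<Longrightarrow> w {x,y} \<ge> 0"
    and xb: "x \<in> box n" and t: "t \<ge> 0"
    and le: "\<And>y. adj x y \<Longrightarrow> w {x,y} \<le> t"
  shows "lambda1 w n \<le> 2 * real CARD('d) * t"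
proof -
  have mem: "energy w (delta x) \<in> {energy w f | f. (\<forall>z. f z \<noteq> 0 \<longrightarrow> z \<in> box n) \<and> l2norm_sq f = 1}"
    using xb l2_delta[of x] by (intro CollectI exI[of _ "delta x"]) (auto simp: delta_def)
  have "lambda1 w n \<le> energy w (delta x)"
    unfolding lambda1_def
    by (rule cInf_lower[OF mem]) (auto intro!: bdd_belowI[of _ 0] energy_nonneg nn)
  also have "\<dots> = (\<Sum>y\<in>nbr x. w {x,y})" by (rule energy_delta)
  also have "\<dots> \<le> (\<Sum>y\<in>nbr x. t)" by (rule sum_mono) (auto simp: nbr_def le)
  also have "\<dots> = real (card (nbr x)) * t" by simp
  also have "\<dots> \<le> real (2 * CARD('d)) * t"
    using card_nbr[of x] t by (intro mult_right_mono) auto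
  finally show ?thesis by simp
qed



lemma box_image: "box m = vec_lambda ` (PiE (UNIV::'d::finite set) (\<lambda>_. {-int m..int m}))"
proof
  show "box m \<subseteq> vec_lambda ` (PiE (UNIV::'d::finite set) (\<lambda>_. {-int m..int m}))"
  proof
    fix x :: "int^'d" assume "x \<in> box m"
    then have "vec_nth x \<in> PiE UNIV (\<lambda>_. {-int m..int m})"
      unfolding box_def PiE_UNIV_domain by (auto simp: abs_le_iff) (metis minus_le_iff)
    then show "x \<in> vec_lambda ` (PiE (UNIV::'d::finite set) (\<lambda>_. {-int m..int m}))"
      by (intro image_eqI[of _ _ "vec_nth x"]) simp_all
  qed
  show "vec_lambda ` (PiE (UNIV::'d::finite set) (\<lambda>_. {-int m..int m})) \<subseteq> box m"
  proof
    fix x :: "int^'d" assume "x \<in> vec_lambda ` (PiE (UNIV::'d set) (\<lambda>_. {-int m..int m}))"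
    then obtain f where f: "f \<in> PiE (UNIV::'d set) (\<lambda>_. {-int m..int m})" "x = vec_lambda f" by blast
    have "\<bar>x$i\<bar> \<le> int m" for i
    proof -
      have "f i \<in> {-int m..int m}" using f(1) unfolding PiE_UNIV_domain by blast
      then show ?thesis using f(2) by (simp add: abs_le_iff)
    qed
    then show "x \<in> box m" by (simp add: box_def)
  qed
qed

lemma finite_box: "finite (box m :: (int^'d) set)"
  unfolding box_image by (intro finite_imageI finite_PiE) auto

lemma card_box: "card (box m :: (int^'d) set) = (2*m+1) ^ CARD('d)"
proof -
  have inj: "inj_on (vec_lambda :: ('d \<Rightarrow> int) \<Rightarrow> int^'d) (PiE UNIV (\<lambda>_. {-int m..int m}))"
    by (rule inj_onI) (simp add: vec_lambda_inject)
  have "card (box m :: (int^'d) set) = card (PiE (UNIV::'d::finite set) (\<lambda>_. {-int m..int m}))"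
    unfolding box_image by (rule card_image[OF inj])
  also have "\<dots> = (\<Prod>i\<in>(UNIV::'d::finite set). card {-int m..int m})" by (rule card_PiE) simp
  also have "\<dots> = (2*m+1) ^ CARD('d)"
  proof -
    have "nat (2 * int m + 1) = 2*m+1" by linarith
    then show ?thesis by simp
  qed
  finally show ?thesis .
qed

definition dbl :: "int^'d \<Rightarrow> int^'d" where
  "dbl z = (\<chi> i. 2 * z$i)"

definition sites :: "nat \<Rightarrow> (int^'d) set" where
  "sites m = dbl ` box m"

lemma inj_dbl: "inj dbl"
  by (rule injI) (auto simp: dbl_def vec_eq_iff)

lemma finite_sites: "finite (sites m)"
  unfolding sites_def using finite_box by (rule finite_imageI)

lemma card_sites: "card (sites m :: (int^'d) set) = (2*m+1) ^ CARD('d)"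
  unfolding sites_def using card_box card_image[OF inj_on_subset[OF inj_dbl subset_UNIV]] by metis

lemma sites_box: "sites (n div 2) \<subseteq> box n"
proof
  fix x :: "int^'d" assume "x \<in> sites (n div 2)"
  then obtain z where z: "z \<in> box (n div 2)" "x = dbl z" by (auto simp: sites_def)
  have "\<bar>x$i\<bar> \<le> int n" for i
  proof -
    have "\<bar>z$i\<bar> \<le> int (n div 2)" using z(1) by (simp add: box_def)
    moreover have "2 * int (n div 2) \<le> int n" by linarith
    moreover have "\<bar>x$i\<bar> = 2 * \<bar>z$i\<bar>" using z(2) by (simp add: dbl_def abs_mult)
    ultimately show ?thesis by linarith
  qed
  then show "x \<in> box n" by (simp add: box_def)
qed

lemma sites_nonadj:
  assumes "x \<in> sites m" "x' \<in> sites m"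
  shows "\<not> adj x x'"
proof
  assume a: "adj x x'"
  from assms obtain z z' where "x = dbl z" "x' = dbl z'" by (auto simp: sites_def)
  then have "\<And>i. even (\<bar>x$i - x'$i\<bar>)"
  proof -
    fix i
    have "x$i - x'$i = 2 * (z$i - z'$i)" using \<open>x = dbl z\<close> \<open>x' = dbl z'\<close> by (simp add: dbl_def)
    then show "even (\<bar>x$i - x'$i\<bar>)" by simp
  qed
  then have "even (l1dist x x')" unfolding l1dist_def by (intro dvd_sum) auto
  with a show False by (simp add: adj_def)
qed

lemma star_disj:
  assumes "x \<noteq> x'" "\<not> adj x x'"
  shows "star x \<inter> star x' = {}"
proof (rule ccontr)
  assume "star x \<inter> star x' \<noteq> {}"
  then obtain y y' where "adj x y" "adj x' y'" "{x,y} = {x',y'}"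
    by (auto simp: star_def nbr_def)
  then show False using assms by (auto simp: doubleton_eq_iff adj_sym)
qed

lemma card_sites_ge: "real (card (sites (n div 2) :: (int^'d) set)) \<ge> real n ^ CARD('d)"
proof -
  have "real n \<le> real (2*(n div 2)+1)" by linarith
  then have "real n ^ CARD('d) \<le> real (2*(n div 2)+1) ^ CARD('d)" by (intro power_mono) auto
  then show ?thesis by (simp add: card_sites)
qed



lemma (in prob_space) fail_bound:
  fixes W :: "(int^'d) set \<Rightarrow> 'a \<Rightarrow> real"
  assumes indep: "indep_vars (\<lambda>_. borel) W edges"
    and law: "\<And>e. e \<in> edges \<Longrightarrow> distr M borel (W e) = \<mu>"
    and S: "finite S" "\<And>x x'. x \<in> S \<Longrightarrow> x' \<in> S \<Longrightarrow> x \<noteq> x' \<Longrightarrow> \<not> adj x x'"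
  shows "prob {\<omega> \<in> space M. \<forall>x\<in>S. \<exists>e\<in>star x. t < W e \<omega>}
           \<le> (1 - measure \<mu> {..t} ^ (2*CARD('d))) ^ card S"
proof (cases "S = {}")
  case True
  then show ?thesis by simp
next
  case Sne: False
  have rv: "\<And>e. e \<in> edges \<Longrightarrow> W e \<in> borel_measurable M"
    using indep by (auto simp: indep_vars_def)
  let ?p = "measure \<mu> {..t}"
  have p01: "0 \<le> ?p" "?p \<le> 1"
  proof -
    obtain x :: "int^'d" where True by simp
    obtain e where e: "e \<in> star x" using star_ne[of x] by blast
    then have ee: "e \<in> edges" using star_edges by blast
    have "?p = prob (W e -` {..t} \<inter> space M)"
      using law[OF ee] measure_distr[OF rv[OF ee], of "{..t}"] by simp
    then show "0 \<le> ?p" "?p \<le> 1" by auto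
  qed
  let ?Y = "\<lambda>x \<omega>. restrict (\<lambda>e. W e \<omega>) (star x)"
  let ?N = "\<lambda>x. PiM (star x) (\<lambda>_. borel :: real measure)"
  have indep2: "indep_vars ?N ?Y S"
  proof (rule indep_vars_restrict[OF indep])
    show "\<And>j. j \<in> S \<Longrightarrow> star j \<subseteq> edges" using star_edges by blast
    show "disjoint_family_on star S"
      unfolding disjoint_family_on_def using S(2) star_disj by blast
  qed
  define B where "B (x::int^'d) = {f \<in> space (?N x). \<exists>e\<in>star x. t < f e}" for x
  have Bmeas: "B x \<in> sets (?N x)" for x
  proof -
    have "B x = (\<Union>e\<in>star x. (\<lambda>f. f e) -` {t<..} \<inter> space (?N x))"
      unfolding B_def by auto
    also have "\<dots> \<in> sets (?N x)"
      using finite_star[of x]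
      by (intro sets.finite_UN) (auto intro!: measurable_sets[OF measurable_component_singleton])
    finally show ?thesis .
  qed
  define G where "G (x::int^'d) = (\<Inter>e\<in>star x. W e -` {..t} \<inter> space M)" for x
  have Gev: "G x \<in> events" for x
    unfolding G_def using star_ne[of x] finite_star[of x] star_edges[of x] rv
    by (intro sets.finite_INT) (auto intro!: measurable_sets)
  have probG: "prob (G x) \<ge> ?p ^ (2*CARD('d))" for x
  proof -
    have "prob (G x) = (\<Prod>e\<in>star x. prob (W e -` {..t} \<inter> space M))"
      unfolding G_def
      by (rule indep_varsD[OF indep]) (use star_ne finite_star star_edges in auto)
    also have "\<dots> = (\<Prod>e\<in>star x. ?p)"
    proof (rule prod.cong)
      fix e assume "e \<in> star x"
      then have ee: "e \<in> edges" using star_edges by blast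
      show "prob (W e -` {..t} \<inter> space M) = ?p"
        using law[OF ee] measure_distr[OF rv[OF ee], of "{..t}"] by simp
    qed simp
    also have "\<dots> = ?p ^ card (star x)" by simp
    also have "\<dots> \<ge> ?p ^ (2*CARD('d))"
      using p01 card_star[of x] by (intro power_decreasing) auto
    finally show ?thesis .
  qed
  have pre: "?Y x -` B x \<inter> space M = space M - G x" if "x \<in> S" for x
    unfolding B_def G_def using star_ne[of x]
    by (auto simp: space_PiM not_le)
  have "{\<omega> \<in> space M. \<forall>x\<in>S. \<exists>e\<in>star x. t < W e \<omega>} = (\<Inter>x\<in>S. ?Y x -` B x \<inter> space M)"
    using Sne unfolding B_def by (auto simp: space_PiM)
  then have "prob {\<omega> \<in> space M. \<forall>x\<in>S. \<exists>e\<in>star x. t < W e \<omega>}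
      = (\<Prod>x\<in>S. prob (?Y x -` B x \<inter> space M))"
    using indep_varsD[OF indep2 Sne S(1) order_refl Bmeas] by simp
  also have "\<dots> = (\<Prod>x\<in>S. 1 - prob (G x))"
    by (rule prod.cong) (auto simp: pre prob_compl Gev)
  also have "\<dots> \<le> (\<Prod>x\<in>S. 1 - ?p ^ (2*CARD('d)))"
    by (rule prod_mono) (use probG in auto)
  also have "\<dots> = (1 - ?p ^ (2*CARD('d))) ^ card S" by simp
  finally show ?thesis .
qed



definition rr :: "nat \<Rightarrow> real" where "rr d = root d (3/2)"
definition nk :: "nat \<Rightarrow> nat \<Rightarrow> nat" where "nk d k = nat \<lceil>rr d ^ k\<rceil>"

lemma rr_gt1: "d > 0 \<Longrightarrow> rr d > 1"
  unfolding rr_def by simp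

lemma rr_pow: "d > 0 \<Longrightarrow> rr d ^ d = 3/2"
  unfolding rr_def by simp

lemma nk_ge: "d > 0 \<Longrightarrow> real (nk d k) \<ge> rr d ^ k"
  unfolding nk_def using rr_gt1[of d] by (simp add: le_nat_iff)

lemma nk_le: "d > 0 \<Longrightarrow> real (nk d k) \<le> rr d ^ k + 1"
proof -
  assume d: "d > 0"
  have p: "rr d ^ k > 0" using rr_gt1[OF d] by simp
  have "real_of_int \<lceil>rr d ^ k\<rceil> \<le> rr d ^ k + 1" by linarith
  moreover have "\<lceil>rr d ^ k\<rceil> \<ge> 0" using p by simp
  ultimately show ?thesis by (simp add: nk_def)
qed

lemma nk_pos: "d > 0 \<Longrightarrow> nk d k \<ge> 1"
proof -
  assume d: "d > 0"
  have "rr d ^ k \<ge> 1" using rr_gt1[OF d] by simp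
  then have "real (nk d k) \<ge> 1" using nk_ge[OF d, of k] by linarith
  then show ?thesis by simp
qed

lemma nk_mono: "d > 0 \<Longrightarrow> i \<le> j \<Longrightarrow> nk d i \<le> nk d j"
  unfolding nk_def using rr_gt1[of d]
  by (intro nat_mono ceiling_mono power_increasing) auto

lemma nk_unbounded: "d > 0 \<Longrightarrow> \<exists>k. n < nk d k"
proof -
  assume d: "d > 0"
  obtain k where "real n < rr d ^ k" using real_arch_pow[OF rr_gt1[OF d]] by blast
  then have "real n < real (nk d k)" using nk_ge[OF d, of k] by linarith
  then show ?thesis by auto
qed

lemma nk_ratio: "d > 0 \<Longrightarrow> \<forall>\<^sub>F k in sequentially. real (nk d (Suc k)) ^ d \<le> 2 * real (nk d k) ^ d"
proof -
  assume d: "d > 0"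
  let ?r = "rr d"
  have r1: "?r > 1" using rr_gt1[OF d] .
  have lim: "(\<lambda>k. (?r + inverse ?r ^ k) ^ d) \<longlonglongrightarrow> (?r + 0) ^ d"
    using r1 by (intro tendsto_intros LIMSEQ_realpow_zero) (auto simp: inverse_less_1_iff)
  then have "\<forall>\<^sub>F k in sequentially. (?r + inverse ?r ^ k) ^ d < 2"
    using rr_pow[OF d] by (intro order_tendstoD) auto
  then show ?thesis
  proof (rule eventually_mono)
    fix k assume k: "(?r + inverse ?r ^ k) ^ d < 2"
    have n0: "real (nk d k) \<ge> ?r ^ k" by (rule nk_ge[OF d])
    have rk: "?r ^ k > 0" using r1 by simp
    have "real (nk d (Suc k)) \<le> ?r ^ Suc k + 1" by (rule nk_le[OF d])
    also have "\<dots> = ?r ^ k * (?r + inverse ?r ^ k)"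
      using rk r1 by (simp add: field_simps power_inverse)
    also have "\<dots> \<le> real (nk d k) * (?r + inverse ?r ^ k)"
      using n0 r1 by (intro mult_right_mono) auto
    finally have "real (nk d (Suc k)) ^ d \<le> (real (nk d k) * (?r + inverse ?r ^ k)) ^ d"
      by (intro power_mono) auto
    also have "\<dots> = real (nk d k) ^ d * (?r + inverse ?r ^ k) ^ d" by (simp add: power_mult_distrib)
    also have "\<dots> \<le> real (nk d k) ^ d * 2" using k by (intro mult_left_mono) auto
    finally show "real (nk d (Suc k)) ^ d \<le> 2 * real (nk d k) ^ d" by simp
  qed
qed

lemma summable_bound:
  assumes "c > 1" "L > 0"
  shows "summable (\<lambda>k::nat. (real (Suc k) * L) powr (-c))"
proof -
  have "summable (\<lambda>n::nat. real n powr (-c))" using assms by (simp add: summable_real_powr_iff)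
  then have "summable (\<lambda>k::nat. real (Suc k) powr (-c))" by (subst summable_Suc_iff)
  then have "summable (\<lambda>k::nat. L powr (-c) * real (Suc k) powr (-c))" by (rule summable_mult)
  then show ?thesis using assms by (simp add: powr_mult mult.commute)
qed



lemma box_mono: "m \<le> n \<Longrightarrow> box m \<subseteq> box n"
  by (auto simp: box_def) (meson of_nat_le_iff order_trans)

theorem theorem1p1:
  fixes M :: "'w measure" and W :: "(int^'d) set \<Rightarrow> 'w \<Rightarrow> real"
    and \<mu> :: "real measure" and g :: "real \<Rightarrow> real"
  assumes d2: "CARD('d) \<ge> 2"
    and P: "prob_space M"
    and indep: "prob_space.indep_vars M (\<lambda>_. borel) W (edges :: (int^'d) set set)"
    and law: "\<And>e. e \<in> (edges :: (int^'d) set set) \<Longrightarrow> distr M borel (W e) = \<mu>"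
    and pos: "\<And>e \<omega>. e \<in> (edges :: (int^'d) set set) \<Longrightarrow> \<omega> \<in> space M \<Longrightarrow> W e \<omega> > 0"
    and gpos: "\<And>u. u > 0 \<Longrightarrow> g u > 0"
    and gmono: "\<And>u v. 0 < u \<Longrightarrow> u \<le> v \<Longrightarrow> g v \<le> g u"
    and glim: "(g \<longlongrightarrow> 0) at_top"
    and growth: "\<exists>\<epsilon>>0. \<forall>\<^sub>F n in sequentially.
        Lambda CARD('d) \<mu> g (real n) / ln (ln (real n)) \<ge> 2 + \<epsilon>"
  shows "AE \<omega> in M. \<forall>\<^sub>F n in sequentially.
        lambda1 (\<lambda>e. W e \<omega> :: real) n \<le> 2 * real CARD('d) * g (real n)"
proof -
  interpret prob_space M by (rule P)
  define d where "d = CARD('d)"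
  have d0: "d > 0" unfolding d_def by simp
  obtain \<epsilon> N0 where eps: "\<epsilon> > 0"
    and grow: "\<And>n. n \<ge> N0 \<Longrightarrow> Lambda d \<mu> g (real n) / ln (ln (real n)) \<ge> 2 + \<epsilon>"
    using growth unfolding eventually_sequentially d_def by blast
  have rv: "\<And>e. e \<in> (edges :: (int^'d) set set) \<Longrightarrow> W e \<in> borel_measurable M"
    using indep by (auto simp: indep_vars_def)
  define p where "p t = measure \<mu> {..t}" for t
  have p01: "0 \<le> p t \<and> p t \<le> 1" for t
  proof -
    obtain x :: "int^'d" where True by simp
    obtain e where e: "e \<in> star x" using star_ne[of x] by blast
    then have ee: "e \<in> edges" using star_edges by blast
    have "p t = prob (W e -` {..t} \<inter> space M)"
      unfolding p_def using law[OF ee] measure_distr[OF rv[OF ee], of "{..t}"] by simp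
    then show ?thesis by auto
  qed
  define tk where "tk k = g (real (nk d (Suc k)))" for k
  define S :: "nat \<Rightarrow> (int^'d) set" where "S k = sites (nk d k div 2)" for k
  define A where "A k = {\<omega> \<in> space M. \<forall>x\<in>S k. \<exists>e\<in>star x. tk k < W e \<omega>}" for k
  have Sfin: "finite (S k)" for k unfolding S_def by (rule finite_sites)
  have Sne: "S k \<noteq> {}" for k
  proof -
    have "card (S k) = (2 * (nk d k div 2) + 1) ^ CARD('d)" unfolding S_def by (rule card_sites)
    then show ?thesis by auto
  qed
  have Ameas: "A k \<in> sets M" for k
    unfolding A_def
  proof (rule sets.sets_Collect_finite_All'[OF _ Sfin Sne])
    fix x assume "x \<in> S k"
    show "{\<omega> \<in> space M. \<exists>e\<in>star x. tk k < W e \<omega>} \<in> sets M"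
    proof (rule sets.sets_Collect_finite_Ex[OF _ finite_star])
      fix e assume "e \<in> star x"
      then have ee: "e \<in> edges" using star_edges by blast
      have "{\<omega> \<in> space M. tk k < W e \<omega>} = W e -` {tk k<..} \<inter> space M" by auto
      also have "\<dots> \<in> sets M" using rv[OF ee] by (rule measurable_sets) simp
      finally show "{\<omega> \<in> space M. tk k < W e \<omega>} \<in> sets M" .
    qed
  qed
  have Abound: "prob (A k) \<le> (1 - p (tk k) ^ (2*d)) ^ card (S k)" for k
    unfolding A_def p_def d_def
  proof (rule fail_bound[OF indep law Sfin])
    fix x x' assume "x \<in> S k" "x' \<in> S k" "x \<noteq> x'"
    then show "\<not> adj x x'" unfolding S_def using sites_nonadj by blast
  qed auto
  define c where "c = 1 + \<epsilon>/2"
  have c1: "c > 1" using eps unfolding c_def by simp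
  define r where "r = rr d"
  have r1: "r > 1" unfolding r_def using rr_gt1[OF d0] .
  have big: "\<forall>\<^sub>F k in sequentially. nk d (Suc k) \<ge> max N0 4"
  proof -
    obtain k0 where "max N0 4 < nk d k0" using nk_unbounded[OF d0] by blast
    then show ?thesis unfolding eventually_sequentially
      by (intro exI[of _ k0] allI impI) (metis le_SucI less_imp_le_nat nk_mono[OF d0] order_trans)
  qed
  have evb: "\<forall>\<^sub>F k in sequentially. prob (A k) \<le> (real (Suc k) * ln r) powr (-c)"
    using big nk_ratio[OF d0]
  proof eventually_elim
    case (elim k)
    define n' where "n' = nk d (Suc k)"
    define n where "n = nk d k"
    define q where "q = p (tk k) ^ (2*d)"
    have q01: "0 \<le> q" "q \<le> 1" unfolding q_def using p01[of "tk k"] by (auto intro: power_le_one)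
    have n'3: "n' \<ge> 4" "n' \<ge> N0" using elim(1) unfolding n'_def by auto
    have ratio: "real n' ^ d \<le> 2 * real n ^ d" using elim(2) unfolding n'_def n_def .
    have cardS: "real (card (S k)) \<ge> real n ^ d"
      unfolding S_def n_def d_def by (rule card_sites_ge)
    have lnn: "ln (real n') > 1"
    proof -
      have "exp 1 < (4::real)" using exp_le by linarith
      also have "\<dots> \<le> real n'" using n'3 by simp
      finally show ?thesis by (metis exp_gt_zero less_trans ln_exp ln_less_cancel_iff)
    qed
    then have lnln: "ln (ln (real n')) > 0" by simp
    have Lam: "real n' ^ d * q \<ge> (2+\<epsilon>) * ln (ln (real n'))"
    proof -
      have "Lambda d \<mu> g (real n') / ln (ln (real n')) \<ge> 2 + \<epsilon>" by (rule grow[OF n'3(2)])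
      then have "Lambda d \<mu> g (real n') \<ge> (2+\<epsilon>) * ln (ln (real n'))"
        using lnln by (simp add: le_divide_eq)
      then show ?thesis unfolding Lambda_def q_def p_def tk_def n'_def by simp
    qed
    have "prob (A k) \<le> (1 - q) ^ card (S k)" using Abound[of k] unfolding q_def .
    also have "\<dots> \<le> exp (-q) ^ card (S k)"
      using q01 by (intro power_mono) (auto simp: exp_ge_add_one_self[of "-q", simplified] intro: order_trans[OF _ exp_ge_add_one_self])
    also have "\<dots> = exp (- (q * real (card (S k))))" by (simp add: exp_of_nat_mult[symmetric] mult.commute)
    also have "\<dots> \<le> exp (- (q * (real n' ^ d / 2)))"
    proof -
      have "real n' ^ d / 2 \<le> real (card (S k))" using ratio cardS by linarith
      then have "q * (real n' ^ d / 2) \<le> q * real (card (S k))" using q01 by (intro mult_left_mono) auto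
      then show ?thesis by simp
    qed
    also have "\<dots> \<le> exp (- (c * ln (ln (real n'))))"
      using Lam unfolding c_def by (simp add: field_simps)
    also have "\<dots> = (ln (real n')) powr (-c)"
      using lnn by (simp add: powr_def)
    also have "\<dots> \<le> (real (Suc k) * ln r) powr (-c)"
    proof (rule powr_mono2')
      show "- c \<le> 0" using c1 by simp
      show "0 < real (Suc k) * ln r" using r1 by simp
      have "r ^ Suc k \<le> real n'" unfolding n'_def r_def by (rule nk_ge[OF d0])
      then have "ln (r ^ Suc k) \<le> ln (real n')" using r1 n'3 by (subst ln_le_cancel_iff) auto
      moreover have "ln (r ^ Suc k) = real (Suc k) * ln r" by (rule ln_realpow)
      ultimately show "real (Suc k) * ln r \<le> ln (real n')" by simp
    qed
    finally show ?case .
  qed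
  have summ: "summable (\<lambda>k. prob (A k))"
  proof (rule summable_comparison_test_ev)
    show "\<forall>\<^sub>F k in sequentially. norm (prob (A k)) \<le> (real (Suc k) * ln r) powr (-c)"
      using evb by eventually_elim simp
    show "summable (\<lambda>k. (real (Suc k) * ln r) powr (-c))"
      using c1 r1 by (intro summable_bound) auto
  qed
  have BC: "AE \<omega> in M. \<forall>\<^sub>F k in sequentially. \<omega> \<in> space M - A k"
    by (rule borel_cantelli_AE1[OF Ameas]) (auto simp: summ less_top[symmetric])
  show ?thesis
    using BC AE_space
  proof eventually_elim
    case (elim \<omega>)
    then have om: "\<omega> \<in> space M" and ev: "\<forall>\<^sub>F k in sequentially. \<omega> \<in> space M - A k" by auto
    obtain K where K: "\<And>k. k \<ge> K \<Longrightarrow> \<omega> \<notin> A k"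
      using ev unfolding eventually_sequentially by blast
    show ?case
      unfolding eventually_sequentially
    proof (intro exI[of _ "max (nk d K) 1"] allI impI)
      fix n assume n: "max (nk d K) 1 \<le> n"
      define L where "L = (LEAST j. n < nk d j)"
      have ex: "\<exists>j. n < nk d j" by (rule nk_unbounded[OF d0])
      have L1: "n < nk d L" unfolding L_def using ex by (rule LeastI_ex)
      have L2: "\<And>j. j < L \<Longrightarrow> nk d j \<le> n" unfolding L_def using not_less_Least by (metis not_less)
      have "nk d 0 = 1" by (simp add: nk_def)
      then have "L \<noteq> 0" using L1 n by (metis gr0I max.bounded_iff not_less)
      then obtain k where Lk: "L = Suc k" using not0_implies_Suc by blast
      have k1: "nk d k \<le> n" using L2[of k] Lk by simp
      have k2: "n < nk d (Suc k)" using L1 Lk by simp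
      have kK: "k \<ge> K"
      proof (rule ccontr)
        assume "\<not> K \<le> k"
        then have "nk d (Suc k) \<le> nk d K" by (intro nk_mono[OF d0]) simp
        then show False using k2 n by simp
      qed
      then have "\<omega> \<notin> A k" by (rule K)
      then obtain x where x: "x \<in> S k" and xe: "\<And>e. e \<in> star x \<Longrightarrow> W e \<omega> \<le> tk k"
        using om unfolding A_def by (auto simp: not_less)
      have xb: "x \<in> box n"
        using x sites_box box_mono[OF k1] unfolding S_def by blast
      have npos: "real n > 0" using n by simp
      show "lambda1 (\<lambda>e. W e \<omega>) n \<le> 2 * real CARD('d) * g (real n)"
      proof (rule lambda1_le[OF _ xb])
        fix y z :: "int^'d" assume "adj y z"
        then have "{y,z} \<in> edges" by (auto simp: edges_def)
        then show "0 \<le> W {y,z} \<omega>" using pos[OF _ om] less_imp_le by blast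
      next
        show "0 \<le> g (real n)" using gpos[OF npos] by simp
      next
        fix y assume "adj x y"
        then have "{x,y} \<in> star x" by (auto simp: star_def nbr_def)
        then have "W {x,y} \<omega> \<le> tk k" by (rule xe)
        also have "tk k \<le> g (real n)" unfolding tk_def using k2 npos by (intro gmono) auto
        finally show "W {x,y} \<omega> \<le> g (real n)" .
      qed
    qed
  qed
qed

end
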